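(* For every $J\subseteq[n]$ and every $j\in J$, the polynomial $\partial_j h^2_{n-|J|+1}(J)$ lies in the ideal $\mathcal I_J=(p_{J,1},\dots,p_{J,n})\subseteq\mathbb C[x_1,\dots,x_n]$.
   Context: $\partial_j=\partial/\partial x_j$. For $S\subseteq[n]$ and an integer $r$, $h^2_r(S)$ is the complete homogeneous symmetric polynomial of degree $r$ in the variables $\{x_s^2:s\in S\}$ (with $h^2_0(S)=1$, $h^2_r(S)=0$ for $r<0$). For $J\subseteq[n]$ and $i\in[n]$ put $r_i=n-|J\cup\{i,\dots,n\}|+1$ and define $p_{J,i}=h^2_{r_i}(J\cup\{i,\dots,n\})$ if $i\notin J$, and $p_{J,i}=\partial_i h^2_{r_i}(J\cup\{i,\dots,n\})$ if $i\in J$. *)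

theory Defs
  imports Complex_Main "HOL-Library.Poly_Mapping"
begin

text \<open>Polynomials in C[x_1,...,x_n] are represented as finitely supported maps from
monomials (exponent vectors nat =>0 nat, indexed by variable number) to coefficients.\<close>

type_synonym mpoly = "(nat \<Rightarrow>\<^sub>0 nat) \<Rightarrow>\<^sub>0 complex"

definition monom :: "(nat \<Rightarrow>\<^sub>0 nat) \<Rightarrow> complex \<Rightarrow> mpoly" where
  "monom m c = Poly_Mapping.single m c"

definition Var :: "nat \<Rightarrow> mpoly" where
  "Var s = monom (Poly_Mapping.single s 1) 1"

text \<open>Complete homogeneous symmetric polynomial of degree r in the variables x_s^2, s in S.\<close>
definition h2 :: "nat \<Rightarrow> nat set \<Rightarrow> mpoly" where
  "h2 r S = (\<Sum>a\<in>{a :: nat \<Rightarrow>\<^sub>0 nat. Poly_Mapping.keys a \<subseteq> S \<and> (\<Sum>s\<in>S. Poly_Mapping.lookup a s) = r}.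
              \<Prod>s\<in>S. (Var s) ^ (2 * Poly_Mapping.lookup a s))"

definition pd :: "nat \<Rightarrow> mpoly \<Rightarrow> mpoly" where
  "pd j p = (\<Sum>m\<in>Poly_Mapping.keys p. monom (m - Poly_Mapping.single j 1)
                              (Poly_Mapping.lookup p m * of_nat (Poly_Mapping.lookup m j)))"

text \<open>r_i = n - |J \<union> {i..n}| + 1 (always \<ge> 1 for J \<subseteq> [n]).\<close>
definition rr :: "nat \<Rightarrow> nat set \<Rightarrow> nat \<Rightarrow> nat" where
  "rr n J i = n + 1 - card (J \<union> {i..n})"

definition pJ :: "nat \<Rightarrow> nat set \<Rightarrow> nat \<Rightarrow> mpoly" where
  "pJ n J i = (if i \<notin> J then h2 (rr n J i) (J \<union> {i..n})
               else pd i (h2 (rr n J i) (J \<union> {i..n})))"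

definition in_IJ :: "nat \<Rightarrow> nat set \<Rightarrow> mpoly \<Rightarrow> bool" where
  "in_IJ n J f \<longleftrightarrow> (\<exists>g :: nat \<Rightarrow> mpoly. f = (\<Sum>i=1..n. g i * pJ n J i))"

end

theory Submission
  imports Defs
begin

lemma pd_superset:
  assumes "finite K" "Poly_Mapping.keys p \<subseteq> K"
  shows "pd j p = (\<Sum>m\<in>K. monom (m - Poly_Mapping.single j 1)
                              (Poly_Mapping.lookup p m * of_nat (Poly_Mapping.lookup m j)))"
  unfolding pd_def
  by (rule sum.mono_neutral_left) (auto simp: assms monom_def in_keys_iff)

lemma pd_add: "pd j (p + q) = pd j p + pd j q"
proof -
  let ?K = "Poly_Mapping.keys p \<union> Poly_Mapping.keys q"
  have f: "finite ?K" by simp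
  have "pd j (p + q) = (\<Sum>m\<in>?K. monom (m - Poly_Mapping.single j 1)
          (Poly_Mapping.lookup (p+q) m * of_nat (Poly_Mapping.lookup m j)))"
    by (rule pd_superset[OF f]) (simp add: keys_add)
  also have "\<dots> = (\<Sum>m\<in>?K. monom (m - Poly_Mapping.single j 1)
          (Poly_Mapping.lookup p m * of_nat (Poly_Mapping.lookup m j)) +
          monom (m - Poly_Mapping.single j 1)
          (Poly_Mapping.lookup q m * of_nat (Poly_Mapping.lookup m j)))"
    by (rule sum.cong) (auto simp: lookup_add monom_def distrib_right single_add)
  also have "\<dots> = pd j p + pd j q"
    by (simp add: sum.distrib pd_superset[OF f])
  finally show ?thesis .
qed

lemma pd_zero[simp]: "pd j 0 = 0"
  by (simp add: pd_def)

lemma pd_sum: "pd j (sum f A) = (\<Sum>a\<in>A. pd j (f a))"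
  by (induction A rule: infinite_finite_induct) (auto simp: pd_add)

lemma pd_single: "pd j (Poly_Mapping.single a c) =
   Poly_Mapping.single (a - Poly_Mapping.single j 1) (c * of_nat (Poly_Mapping.lookup a j))"
proof (cases "c = 0")
  case True then show ?thesis by simp
next
  case False then show ?thesis by (simp add: pd_def monom_def)
qed

lemma pm_expand: "(p::mpoly) = (\<Sum>a\<in>Poly_Mapping.keys p. Poly_Mapping.single a (Poly_Mapping.lookup p a))"
  by (rule poly_mapping_eqI) (auto simp: lookup_sum lookup_single when_def in_keys_iff
        intro: sum.neutral elim: sum.remove[THEN trans])

lemma shift_single:
  "Poly_Mapping.single (a + (b - Poly_Mapping.single j 1)) (z * of_nat (Poly_Mapping.lookup b j)) =
   Poly_Mapping.single (a + b - Poly_Mapping.single j 1) (z * of_nat (Poly_Mapping.lookup b j) :: complex)"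
proof (cases "Poly_Mapping.lookup b j = 0")
  case True then show ?thesis by simp
next
  case False
  have e: "a + (b - Poly_Mapping.single j 1) = a + b - Poly_Mapping.single j (1::nat)"
  proof (rule poly_mapping_eqI)
    fix k show "Poly_Mapping.lookup (a + (b - Poly_Mapping.single j 1)) k = Poly_Mapping.lookup (a + b - Poly_Mapping.single j 1) k"
      using False by (cases "k = j") (simp_all add: lookup_add lookup_minus lookup_single)
  qed
  show ?thesis by (metis e)
qed

lemma pd_single_mult:
  "pd j (Poly_Mapping.single a c * Poly_Mapping.single b d) =
   pd j (Poly_Mapping.single a c) * Poly_Mapping.single b d +
   Poly_Mapping.single a c * pd j (Poly_Mapping.single b d)"
proof -
  let ?D = "Poly_Mapping.single j (1::nat)"
  have 1: "pd j (Poly_Mapping.single a c * Poly_Mapping.single b d) =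
     Poly_Mapping.single (a + b - ?D) ((c * d) * of_nat (Poly_Mapping.lookup a j)) +
     Poly_Mapping.single (a + b - ?D) ((c * d) * of_nat (Poly_Mapping.lookup b j))"
    by (simp add: mult_single pd_single lookup_add single_add[symmetric] distrib_left)
  have 2: "pd j (Poly_Mapping.single a c) * Poly_Mapping.single b d =
     Poly_Mapping.single (b + (a - ?D)) ((c * d) * of_nat (Poly_Mapping.lookup a j))"
    by (simp add: mult_single pd_single add.commute mult.commute mult.left_commute mult.assoc)
  have 3: "Poly_Mapping.single a c * pd j (Poly_Mapping.single b d) =
     Poly_Mapping.single (a + (b - ?D)) ((c * d) * of_nat (Poly_Mapping.lookup b j))"
    by (simp add: mult_single pd_single mult.assoc)
  show ?thesis unfolding 1 2 3 shift_single by (simp add: add.commute)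
qed

lemma pd_mult: "pd j (p * q) = pd j p * q + p * pd j q"
proof -
  let ?P = "Poly_Mapping.keys p" and ?Q = "Poly_Mapping.keys q"
  let ?sp = "\<lambda>a. Poly_Mapping.single a (Poly_Mapping.lookup p a)"
  let ?sq = "\<lambda>b. Poly_Mapping.single b (Poly_Mapping.lookup q b)"
  have "p * q = (\<Sum>a\<in>?P. ?sp a) * (\<Sum>b\<in>?Q. ?sq b)"
    using pm_expand[of p] pm_expand[of q] by simp
  also have "\<dots> = (\<Sum>a\<in>?P. \<Sum>b\<in>?Q. ?sp a * ?sq b)"
    by (simp add: sum_product)
  finally have pq: "p * q = (\<Sum>a\<in>?P. \<Sum>b\<in>?Q. ?sp a * ?sq b)" .
  have "pd j (p * q) = (\<Sum>a\<in>?P. \<Sum>b\<in>?Q. pd j (?sp a) * ?sq b + ?sp a * pd j (?sq b))"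
    by (simp add: pq pd_sum pd_single_mult)
  also have "\<dots> = (\<Sum>a\<in>?P. pd j (?sp a)) * (\<Sum>b\<in>?Q. ?sq b) + (\<Sum>a\<in>?P. ?sp a) * (\<Sum>b\<in>?Q. pd j (?sq b))"
    by (simp add: sum.distrib sum_product)
  also have "\<dots> = pd j p * q + p * pd j q"
    using pm_expand[of p] pm_expand[of q] by (simp add: pd_sum[symmetric])
  finally show ?thesis .
qed

definition hA :: "nat \<Rightarrow> nat set \<Rightarrow> (nat \<Rightarrow>\<^sub>0 nat) set" where
  "hA r S = {a :: nat \<Rightarrow>\<^sub>0 nat. Poly_Mapping.keys a \<subseteq> S \<and> (\<Sum>s\<in>S. Poly_Mapping.lookup a s) = r}"

definition hP :: "nat set \<Rightarrow> (nat \<Rightarrow>\<^sub>0 nat) \<Rightarrow> mpoly" where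
  "hP S a = (\<Prod>s\<in>S. (Var s) ^ (2 * Poly_Mapping.lookup a s))"

lemma h2_alt: "h2 r S = sum (hP S) (hA r S)"
  unfolding h2_def hA_def hP_def by (rule refl)

lemma finite_hA:
  assumes "finite S" shows "finite (hA r S)"
proof -
  have sub: "Poly_Mapping.lookup ` hA r S \<subseteq> {f. \<forall>x. (x \<in> S \<longrightarrow> f x \<in> {0..r}) \<and> (x \<notin> S \<longrightarrow> f x = 0)}"
  proof
    fix f assume "f \<in> Poly_Mapping.lookup ` hA r S"
    then obtain a where a: "a \<in> hA r S" "f = Poly_Mapping.lookup a" by auto
    have ka: "Poly_Mapping.keys a \<subseteq> S" and sa: "sum (Poly_Mapping.lookup a) S = r"
      using a(1) by (simp_all add: hA_def)
    have le: "Poly_Mapping.lookup a x \<le> r" if "x \<in> S" for x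
    proof -
      have "Poly_Mapping.lookup a x \<le> sum (Poly_Mapping.lookup a) S"
        by (rule member_le_sum[OF that _ assms]) simp
      then show ?thesis using sa by simp
    qed
    have z: "Poly_Mapping.lookup a x = 0" if "x \<notin> S" for x
      using ka that by (metis in_keys_iff subsetD)
    show "f \<in> {f. \<forall>x. (x \<in> S \<longrightarrow> f x \<in> {0..r}) \<and> (x \<notin> S \<longrightarrow> f x = 0)}"
      unfolding a(2) using le z by simp
  qed
  have "finite (Poly_Mapping.lookup ` hA r S)"
    by (rule finite_subset[OF sub]) (rule finite_set_of_finite_funs, simp_all add: assms)
  moreover have "inj_on Poly_Mapping.lookup (hA r S)"
    by (intro inj_onI poly_mapping_eqI) simp
  ultimately show ?thesis by (rule finite_imageD)
qed

lemma hA_empty: "hA r {} = (if r = 0 then {0} else {})"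
  by (auto simp: hA_def)

lemma hA_zero: assumes "finite S" shows "hA 0 S = {0}"
proof -
  { fix a :: "nat \<Rightarrow>\<^sub>0 nat" assume k: "Poly_Mapping.keys a \<subseteq> S" and s: "(\<Sum>s\<in>S. Poly_Mapping.lookup a s) = 0"
    have "a = 0"
    proof (rule poly_mapping_eqI)
      fix x show "Poly_Mapping.lookup a x = Poly_Mapping.lookup 0 x"
        using k s assms by (cases "x \<in> S") (auto simp: in_keys_iff)
    qed }
  then show ?thesis by (auto simp: hA_def)
qed

lemma h2_empty: "h2 r {} = (if r = 0 then 1 else 0)"
  by (simp add: h2_alt hA_empty hP_def)

lemma h2_zero: "finite S \<Longrightarrow> h2 0 S = 1"
  by (simp add: h2_alt hA_zero hP_def)

lemma lookup_add_single: "Poly_Mapping.lookup (b + Poly_Mapping.single k 1) s = Poly_Mapping.lookup b s + (if s = k then 1 else 0)"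
  by (simp add: lookup_add lookup_single when_def)

lemma lookup_add_single': "Poly_Mapping.lookup (b + Poly_Mapping.single k (Suc 0)) s = Poly_Mapping.lookup b s + (if s = k then 1 else 0)"
  by (simp add: lookup_add lookup_single when_def)

lemma h2_rec:
  assumes S: "finite S" and k: "k \<notin> S" and m: "0 < m"
  shows "h2 m (insert k S) = h2 m S + Var k ^ 2 * h2 (m - 1) (insert k S)"
proof -
  let ?T = "insert k S"
  let ?D = "Poly_Mapping.single k (1::nat)"
  have fT: "finite (hA m ?T)" using S by (simp add: finite_hA)
  have split: "hA m ?T = {a\<in>hA m ?T. Poly_Mapping.lookup a k = 0} \<union> {a\<in>hA m ?T. Poly_Mapping.lookup a k \<noteq> 0}"
    by auto
  have X1: "{a\<in>hA m ?T. Poly_Mapping.lookup a k = 0} = hA m S"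
  proof
    show "{a\<in>hA m ?T. Poly_Mapping.lookup a k = 0} \<subseteq> hA m S"
      using S k by (auto simp: hA_def in_keys_iff)
    show "hA m S \<subseteq> {a\<in>hA m ?T. Poly_Mapping.lookup a k = 0}"
      using S k by (auto simp: hA_def in_keys_iff)
  qed
  have P1: "hP ?T a = hP S a" if "Poly_Mapping.lookup a k = 0" for a
    using S k that by (simp add: hP_def)
  have s1: "sum (hP ?T) {a\<in>hA m ?T. Poly_Mapping.lookup a k = 0} = h2 m S"
    unfolding X1 h2_alt
  proof (rule sum.cong)
    fix x assume "x \<in> hA m S"
    then have "Poly_Mapping.keys x \<subseteq> S" by (simp add: hA_def)
    then have "Poly_Mapping.lookup x k = 0" using k by (metis in_keys_iff subsetD)
    then show "hP ?T x = hP S x" by (rule P1)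
  qed simp
  have sumD: "(\<Sum>s\<in>?T. Poly_Mapping.lookup (b + ?D) s) = (\<Sum>s\<in>?T. Poly_Mapping.lookup b s) + 1" for b
  proof -
    have "Poly_Mapping.lookup (b + ?D) = (\<lambda>s. Poly_Mapping.lookup b s + (if s = k then 1 else 0))"
      by (rule ext) (rule lookup_add_single)
    then show ?thesis using S by (simp add: sum.distrib)
  qed
  have s2: "(\<Sum>b\<in>hA (m-1) ?T. Var k ^ 2 * hP ?T b) = sum (hP ?T) {a\<in>hA m ?T. Poly_Mapping.lookup a k \<noteq> 0}"
  proof (rule sum.reindex_bij_witness[where i = "\<lambda>a. a - ?D" and j = "\<lambda>b. b + ?D"])
    fix b assume b: "b \<in> hA (m-1) ?T"
    show "b + ?D - ?D = b"
      by (rule poly_mapping_eqI) (simp add: lookup_minus lookup_add_single)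
    show "b + ?D \<in> {a\<in>hA m ?T. Poly_Mapping.lookup a k \<noteq> 0}"
    proof -
      have kb: "Poly_Mapping.keys b \<subseteq> ?T" and sb: "(\<Sum>s\<in>?T. Poly_Mapping.lookup b s) = m - 1"
        using b by (auto simp: hA_def)
      have "Poly_Mapping.keys (b + ?D) \<subseteq> ?T"
      proof
        fix x assume "x \<in> Poly_Mapping.keys (b + ?D)"
        then have "Poly_Mapping.lookup b x + (if x = k then 1 else 0) \<noteq> 0"
          by (simp add: in_keys_iff lookup_add_single lookup_add_single')
        then show "x \<in> ?T"
        proof (cases "x = k")
          case False
          with \<open>Poly_Mapping.lookup b x + (if x = k then 1 else 0) \<noteq> 0\<close> have "x \<in> Poly_Mapping.keys b"
            by (simp add: in_keys_iff)
          then show ?thesis using kb by blast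
        qed simp
      qed
      moreover have "(\<Sum>s\<in>?T. Poly_Mapping.lookup (b + ?D) s) = m"
        using sumD[of b] sb m by simp
      moreover have "Poly_Mapping.lookup (b + ?D) k \<noteq> 0"
        by (simp add: lookup_add_single lookup_add_single')
      ultimately show ?thesis by (simp add: hA_def)
    qed
    show "hP ?T (b + ?D) = Var k ^ 2 * hP ?T b"
    proof -
      have pc: "(\<Prod>s\<in>S. Var s ^ (2 * Poly_Mapping.lookup (b + ?D) s)) = (\<Prod>s\<in>S. Var s ^ (2 * Poly_Mapping.lookup b s))"
        by (rule prod.cong) (use k in \<open>auto simp: lookup_add_single lookup_add_single'\<close>)
      have pk: "Var k ^ (2 * Poly_Mapping.lookup (b + ?D) k) = Var k ^ 2 * Var k ^ (2 * Poly_Mapping.lookup b k)"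
        by (simp add: lookup_add_single lookup_add_single' power_add[symmetric])
      show ?thesis unfolding hP_def by (simp only: prod.insert[OF S k] pc pk mult.assoc)
    qed
  next
    fix a assume a: "a \<in> {a\<in>hA m ?T. Poly_Mapping.lookup a k \<noteq> 0}"
    have e: "a - ?D + ?D = a"
    proof (rule poly_mapping_eqI)
      fix x show "Poly_Mapping.lookup (a - ?D + ?D) x = Poly_Mapping.lookup a x"
        using a by (cases "x = k") (simp_all add: lookup_add lookup_minus lookup_single)
    qed
    show "a - ?D + ?D = a" by (rule e)
    have "(\<Sum>s\<in>?T. Poly_Mapping.lookup (a - ?D) s) + 1 = m"
      using sumD[of "a - ?D", unfolded e] a by (simp add: hA_def)
    moreover have "Poly_Mapping.keys (a - ?D) \<subseteq> ?T"
    proof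
      fix x assume "x \<in> Poly_Mapping.keys (a - ?D)"
      then have "Poly_Mapping.lookup a x \<noteq> 0" by (auto simp: in_keys_iff lookup_minus)
      then have "x \<in> Poly_Mapping.keys a" by (simp add: in_keys_iff)
      then show "x \<in> ?T" using a by (auto simp: hA_def)
    qed
    ultimately show "a - ?D \<in> hA (m-1) ?T" by (auto simp: hA_def)
  qed
  have "h2 m ?T = sum (hP ?T) {a\<in>hA m ?T. Poly_Mapping.lookup a k = 0} + sum (hP ?T) {a\<in>hA m ?T. Poly_Mapping.lookup a k \<noteq> 0}"
  proof -
    have "sum (hP ?T) ({a\<in>hA m ?T. Poly_Mapping.lookup a k = 0} \<union> {a\<in>hA m ?T. Poly_Mapping.lookup a k \<noteq> 0}) =
      sum (hP ?T) {a\<in>hA m ?T. Poly_Mapping.lookup a k = 0} + sum (hP ?T) {a\<in>hA m ?T. Poly_Mapping.lookup a k \<noteq> 0}"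
      by (rule sum.union_disjoint) (use fT in auto)
    then show ?thesis unfolding h2_alt by (simp only: split[symmetric])
  qed
  also have "\<dots> = h2 m S + Var k ^ 2 * h2 (m - 1) ?T"
    unfolding s1 s2[symmetric] by (simp add: h2_alt sum_distrib_left)
  finally show ?thesis .
qed

lemma pd_one[simp]: "pd j 1 = 0"
proof -
  have "pd j (Poly_Mapping.single 0 1) = Poly_Mapping.single (0 - Poly_Mapping.single j 1) (1 * of_nat (Poly_Mapping.lookup 0 j))"
    by (rule pd_single)
  then show ?thesis by simp
qed

lemma pd_const: "pd j (Poly_Mapping.single 0 c) = 0"
  by (simp add: pd_single)

lemma pd_Var: "pd j (Var s) = (if s = j then 1 else 0)"
proof (cases "s = j")
  case True
  have "Poly_Mapping.single s (1::nat) - Poly_Mapping.single s 1 = 0"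
    by (rule poly_mapping_eqI) (simp add: lookup_minus)
  then show ?thesis using True by (simp add: Var_def monom_def pd_single)
next
  case False
  then show ?thesis by (simp add: Var_def monom_def pd_single lookup_single)
qed

lemma pd_Var2: "pd j (Var s ^ 2) = (if s = j then 2 * Var s else 0)"
  by (simp add: power2_eq_square pd_mult pd_Var)

lemma pd_diff: "pd j (p - q) = pd j p - pd j q"
proof -
  have "pd j (p - q) + pd j q = pd j p" using pd_add[of j "p - q" q] by simp
  then show ?thesis by (simp add: eq_diff_eq)
qed

lemma pd_h2_notin:
  assumes "finite S" "i \<notin> S"
  shows "pd i (h2 m S) = 0"
  using assms
proof (induction S arbitrary: m rule: finite_induct)
  case empty
  then show ?case by (simp add: h2_empty)
next
  case (insert k S)
  show ?case
  proof (induction m)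
    case 0
    then show ?case using insert by (simp add: h2_zero)
  next
    case (Suc m)
    have "h2 (Suc m) (insert k S) = h2 (Suc m) S + Var k ^ 2 * h2 m (insert k S)"
      using h2_rec[OF insert(1,2), of "Suc m"] by simp
    then show ?case using Suc insert by (simp add: pd_add pd_mult pd_Var2)
  qed
qed

definition Eul :: "nat set \<Rightarrow> mpoly \<Rightarrow> mpoly" where
  "Eul J p = (\<Sum>k\<in>J. Var k * pd k p)"

lemma Eul_add: "Eul J (p + q) = Eul J p + Eul J q"
  by (simp add: Eul_def pd_add distrib_left sum.distrib)

lemma Eul_mult: "Eul J (p * q) = Eul J p * q + p * Eul J q"
  by (simp add: Eul_def pd_mult distrib_left sum.distrib sum_distrib_left sum_distrib_right algebra_simps)

lemma Eul_zero[simp]: "Eul J 0 = 0"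
  by (simp add: Eul_def)

lemma Eul_one: "Eul J 1 = 0"
  by (simp add: Eul_def)

lemma Eul_Var2: "finite J \<Longrightarrow> s \<in> J \<Longrightarrow> Eul J (Var s ^ 2) = 2 * Var s ^ 2"
proof -
  assume "finite J" "s \<in> J"
  have "Eul J (Var s ^ 2) = (\<Sum>k\<in>J. if k = s then Var k * (2 * Var s) else 0)"
    unfolding Eul_def by (rule sum.cong) (auto simp: pd_Var2)
  also have "\<dots> = 2 * Var s ^ 2"
    using \<open>finite J\<close> \<open>s \<in> J\<close> by (simp add: sum.delta power2_eq_square)
  finally show ?thesis .
qed

lemma Eul_h2:
  assumes "finite J" "finite S" "S \<subseteq> J"
  shows "Eul J (h2 m S) = of_nat (2 * m) * h2 m S"
  using assms(2,3)
proof (induction S arbitrary: m rule: finite_induct)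
  case empty
  then show ?case by (simp add: h2_empty Eul_one)
next
  case (insert k S)
  have kJ: "k \<in> J" using insert by auto
  show ?case
  proof (induction m)
    case 0
    then show ?case using insert by (simp add: h2_zero Eul_one)
  next
    case (Suc m)
    have e: "h2 (Suc m) (insert k S) = h2 (Suc m) S + Var k ^ 2 * h2 m (insert k S)"
      using h2_rec[OF insert(1,2), of "Suc m"] by simp
    have IS: "Eul J (h2 (Suc m) S) = of_nat (2 * Suc m) * h2 (Suc m) S"
      using insert by auto
    show ?case unfolding e Eul_add Eul_mult IS Suc Eul_Var2[OF assms(1) kJ]
      by (simp add: algebra_simps)
  qed
qed

lemma in_IJ_zero: "in_IJ n J 0"
  unfolding in_IJ_def by (rule exI[of _ "\<lambda>_. 0"]) simp

lemma in_IJ_add: "in_IJ n J f \<Longrightarrow> in_IJ n J g \<Longrightarrow> in_IJ n J (f + g)"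
  unfolding in_IJ_def
proof (elim exE)
  fix a b assume "f = (\<Sum>i = 1..n. a i * pJ n J i)" "g = (\<Sum>i = 1..n. b i * pJ n J i)"
  then show "\<exists>c. f + g = (\<Sum>i = 1..n. c i * pJ n J i)"
    by (intro exI[of _ "\<lambda>i. a i + b i"]) (simp add: distrib_right sum.distrib)
qed

lemma in_IJ_mult: "in_IJ n J f \<Longrightarrow> in_IJ n J (c * f)"
  unfolding in_IJ_def
proof (elim exE)
  fix a assume "f = (\<Sum>i = 1..n. a i * pJ n J i)"
  then show "\<exists>b. c * f = (\<Sum>i = 1..n. b i * pJ n J i)"
    by (intro exI[of _ "\<lambda>i. c * a i"]) (simp add: sum_distrib_left mult.assoc)
qed

lemma in_IJ_diff: "in_IJ n J f \<Longrightarrow> in_IJ n J g \<Longrightarrow> in_IJ n J (f - g)"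
  using in_IJ_add[of n J f "(-1) * g"] in_IJ_mult[of n J g "-1"] by simp

lemma in_IJ_sum: "finite A \<Longrightarrow> (\<And>a. a \<in> A \<Longrightarrow> in_IJ n J (f a)) \<Longrightarrow> in_IJ n J (sum f A)"
  by (induction A rule: finite_induct) (auto intro: in_IJ_add in_IJ_zero)

lemma in_IJ_gen: "1 \<le> i \<Longrightarrow> i \<le> n \<Longrightarrow> in_IJ n J (pJ n J i)"
  unfolding in_IJ_def
proof (intro exI[of _ "\<lambda>k. if k = i then 1 else 0"])
  assume "1 \<le> i" "i \<le> n"
  have "(\<Sum>k = 1..n. (if k = i then 1 else 0) * pJ n J k) = (\<Sum>k = 1..n. if k = i then pJ n J k else 0)"
    by (rule sum.cong) auto
  also have "\<dots> = pJ n J i" using \<open>1 \<le> i\<close> \<open>i \<le> n\<close> by (simp add: sum.delta')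
  finally show "pJ n J i = (\<Sum>k = 1..n. (if k = i then 1 else 0) * pJ n J k)" by simp
qed

lemma const_inv: "N \<noteq> 0 \<Longrightarrow> Poly_Mapping.single 0 (1 / of_nat N) * (of_nat N * (h::mpoly)) = h"
proof -
  assume N: "N \<noteq> 0"
  have "Poly_Mapping.single 0 (1 / of_nat N) * (of_nat N * h) =
        (Poly_Mapping.single 0 (1 / of_nat N) * Poly_Mapping.single 0 (of_nat N)) * h"
    by (simp only: single_of_nat mult.assoc)
  also have "\<dots> = h" using N by (simp add: mult_single del: single_of_nat)
  finally show ?thesis .
qed

theorem mainTheorem4:
  fixes n :: nat and J :: "nat set" and j :: nat
  assumes "J \<subseteq> {1..n}" and "j \<in> J"
  shows "in_IJ n J (pd j (h2 (n - card J + 1) J))"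
proof -
  define S where "S i = J \<union> {i..n}" for i
  define r where "r i = rr n J i" for i
  have finJ: "finite J" using assms(1) finite_subset by blast
  have finS: "finite (S i)" for i using finJ by (simp add: S_def)
  have r_pos: "1 \<le> r i" if "1 \<le> i" for i
  proof -
    have "S i \<subseteq> {1..n}" using assms(1) that by (auto simp: S_def)
    then have "card (S i) \<le> n" using card_mono[of "{1..n}" "S i"] by simp
    then show ?thesis by (simp add: r_def rr_def S_def)
  qed
  have step_notin: "S i = insert i (S (Suc i)) \<and> i \<notin> S (Suc i) \<and> r (Suc i) = Suc (r i)"
    if "1 \<le> i" "i \<le> n" "i \<notin> J" for i
  proof -
    have e: "S i = insert i (S (Suc i))" using that by (auto simp: S_def)
    have ni: "i \<notin> S (Suc i)" using that by (auto simp: S_def)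
    have c: "card (S i) = Suc (card (S (Suc i)))" using e ni finS by simp
    have "S i \<subseteq> {1..n}" using assms(1) that by (auto simp: S_def)
    then have "card (S i) \<le> n" using card_mono[of "{1..n}" "S i"] by simp
    then have "r (Suc i) = Suc (r i)" using c by (simp add: r_def rr_def S_def)
    then show ?thesis using e ni by simp
  qed
  have step_in: "S (Suc i) = S i \<and> r (Suc i) = r i" if "i \<in> J" for i
  proof -
    have "x \<in> J" if "i \<le> x" "\<not> Suc i \<le> x" for x
      using that \<open>i \<in> J\<close> by (metis le_antisym not_less_eq_eq)
    then have "S (Suc i) = S i" using that by (auto simp: S_def)
    then show ?thesis by (simp add: r_def rr_def S_def)
  qed
  have pJ_eq: "pJ n J i = (if i \<notin> J then h2 (r i) (S i) else pd i (h2 (r i) (S i)))" for i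
    by (simp add: pJ_def r_def S_def)
  have SJ: "S (Suc n) = J" by (simp add: S_def)
  have cardJ: "card J \<le> n" using card_mono[OF _ assms(1)] by simp
  have rJ: "r (Suc n) = n - card J + 1" using SJ cardJ by (simp add: r_def rr_def S_def)
  have main: "(\<forall>i. 1 \<le> i \<longrightarrow> i \<le> Suc n \<longrightarrow> r i \<le> m \<longrightarrow> in_IJ n J (h2 m (S i))) \<and>
      (\<forall>i k. i \<le> Suc n \<longrightarrow> k \<in> J \<longrightarrow> k < i \<longrightarrow> r i \<le> m \<longrightarrow> in_IJ n J (pd k (h2 m (S i))))" for m
  proof (induction m)
    case 0
    show ?case
    proof (intro conjI allI impI)
      fix i assume "1 \<le> i" "i \<le> Suc n" "r i \<le> 0"
      then show "in_IJ n J (h2 0 (S i))" using r_pos[of i] by simp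
    next
      fix i k assume "i \<le> Suc n" "k \<in> J" "k < i" "r i \<le> 0"
      moreover have "1 \<le> i" using \<open>k \<in> J\<close> \<open>k < i\<close> assms(1) by auto
      ultimately show "in_IJ n J (pd k (h2 0 (S i)))" using r_pos[of i] by simp
    qed
  next
    case (Suc m)
    have Am: "in_IJ n J (h2 m (S i))" if "1 \<le> i" "i \<le> Suc n" "r i \<le> m" for i
      using Suc that by blast
    have Bm: "in_IJ n J (pd k (h2 m (S i)))" if "i \<le> Suc n" "k \<in> J" "k < i" "r i \<le> m" for i k
      using Suc that by blast
    have B': "\<forall>k. k \<in> J \<longrightarrow> k < i \<longrightarrow> r i \<le> Suc m \<longrightarrow> in_IJ n J (pd k (h2 (Suc m) (S i)))"
      if "i \<le> Suc n" for i
      using that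
    proof (induction i)
      case 0
      then show ?case by simp
    next
      case (Suc i)
      show ?case
      proof (intro allI impI)
        fix k assume kJ: "k \<in> J" and ki: "k < Suc i" and ri: "r (Suc i) \<le> Suc m"
        have i1: "1 \<le> i" using kJ ki assms(1) by auto
        have "i \<le> n" using Suc.prems by simp
        show "in_IJ n J (pd k (h2 (Suc m) (S (Suc i))))"
        proof (cases "i \<in> J")
          case False
          note st = step_notin[OF i1 \<open>i \<le> n\<close> False]
          have kne: "k \<noteq> i" using kJ False by auto
          have rim: "r i \<le> m" using st ri by simp
          have "h2 (Suc m) (S i) = h2 (Suc m) (S (Suc i)) + Var i ^ 2 * h2 m (S i)"
            using h2_rec[OF finS[of "Suc i"], of i "Suc m"] st by simp
          then have e: "h2 (Suc m) (S (Suc i)) = h2 (Suc m) (S i) - Var i ^ 2 * h2 m (S i)"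
            by (simp add: eq_diff_eq)
          have "pd k (h2 (Suc m) (S (Suc i))) = pd k (h2 (Suc m) (S i)) - Var i ^ 2 * pd k (h2 m (S i))"
            unfolding e using kne by (simp add: pd_diff pd_mult pd_Var2)
          moreover have "in_IJ n J (pd k (h2 (Suc m) (S i)))"
            using Suc.IH \<open>i \<le> n\<close> kJ ki kne rim by simp
          moreover have "in_IJ n J (pd k (h2 m (S i)))"
            using Bm[of i k] \<open>i \<le> n\<close> kJ ki kne rim by simp
          ultimately show ?thesis by (simp add: in_IJ_diff in_IJ_mult)
        next
          case True
          note st = step_in[OF True]
          show ?thesis
          proof (cases "k < i")
            case True
            then show ?thesis using Suc.IH \<open>i \<le> n\<close> kJ ri st by simp
          next
            case False
            then have ki': "k = i" using ki by simp
            show ?thesis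
            proof (cases "r i = Suc m")
              case True
              then have "pd k (h2 (Suc m) (S (Suc i))) = pJ n J i"
                using pJ_eq[of i] st ki' \<open>i \<in> J\<close> by simp
              then show ?thesis using in_IJ_gen[OF i1 \<open>i \<le> n\<close>] by simp
            next
              case False
              then have rim: "r i \<le> m" using ri st by simp
              have Si: "S i = insert i (S i - {i})" using \<open>i \<in> J\<close> by (auto simp: S_def)
              have "h2 (Suc m) (S i) = h2 (Suc m) (S i - {i}) + Var i ^ 2 * h2 m (S i)"
                using h2_rec[of "S i - {i}" i "Suc m"] finS[of i] Si by simp
              then have "pd i (h2 (Suc m) (S i)) = 2 * Var i * h2 m (S i) + Var i ^ 2 * pd i (h2 m (S i))"
                using pd_h2_notin[of "S i - {i}" i "Suc m"] finS[of i]
                by (simp add: pd_add pd_mult pd_Var2)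
              moreover have "in_IJ n J (h2 m (S i))" using Am[OF i1 _ rim] \<open>i \<le> n\<close> by simp
              moreover have "in_IJ n J (pd i (h2 m (S (Suc i))))"
                using Bm[of "Suc i" i] \<open>i \<le> n\<close> \<open>i \<in> J\<close> rim st by simp
              ultimately show ?thesis using ki' st
                by (simp add: in_IJ_add in_IJ_mult mult.assoc)
            qed
          qed
        qed
      qed
    qed
    have A': "r (Suc n - d) \<le> Suc m \<longrightarrow> in_IJ n J (h2 (Suc m) (S (Suc n - d)))" if "d \<le> n" for d
      using that
    proof (induction d)
      case 0
      show ?case
      proof
        assume rs: "r (Suc n - 0) \<le> Suc m"
        have "in_IJ n J (Eul J (h2 (Suc m) J))"
          unfolding Eul_def
        proof (rule in_IJ_sum[OF finJ])
          fix k assume "k \<in> J"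
          then have "k < Suc n" using assms(1) by auto
          then show "in_IJ n J (Var k * pd k (h2 (Suc m) J))"
            using B'[of "Suc n"] \<open>k \<in> J\<close> rs SJ by (simp add: in_IJ_mult)
        qed
        then have "in_IJ n J (of_nat (2 * Suc m) * h2 (Suc m) J)"
          using Eul_h2[OF finJ finJ] by simp
        then have "in_IJ n J (Poly_Mapping.single 0 (1 / of_nat (2 * Suc m)) * (of_nat (2 * Suc m) * h2 (Suc m) J))"
          by (rule in_IJ_mult)
        moreover have ci: "Poly_Mapping.single 0 (1 / of_nat (2 * Suc m)) * (of_nat (2 * Suc m) * h2 (Suc m) J) = h2 (Suc m) J"
          by (rule const_inv) simp
        ultimately have "in_IJ n J (h2 (Suc m) J)" by (simp only:)
        then show "in_IJ n J (h2 (Suc m) (S (Suc n - 0)))"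
          using SJ by simp
      qed
    next
      case (Suc d)
      define i where "i = n - d"
      have i1: "1 \<le> i" "i \<le> n" using Suc.prems by (auto simp: i_def)
      have ii: "Suc n - Suc d = i" "Suc n - d = Suc i" using Suc.prems by (auto simp: i_def)
      have IH: "r (Suc i) \<le> Suc m \<longrightarrow> in_IJ n J (h2 (Suc m) (S (Suc i)))"
        using Suc ii by simp
      show ?case unfolding ii
      proof
        assume ri: "r i \<le> Suc m"
        show "in_IJ n J (h2 (Suc m) (S i))"
        proof (cases "i \<in> J")
          case True
          then show ?thesis using IH step_in[OF True] ri by simp
        next
          case False
          note st = step_notin[OF i1 False]
          show ?thesis
          proof (cases "r i = Suc m")
            case True
            then have "h2 (Suc m) (S i) = pJ n J i" using pJ_eq[of i] False by simp
            then show ?thesis using in_IJ_gen[OF i1] by simp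
          next
            case False
            then have rim: "r i \<le> m" using ri by simp
            have "h2 (Suc m) (S i) = h2 (Suc m) (S (Suc i)) + Var i ^ 2 * h2 m (S i)"
              using h2_rec[OF finS[of "Suc i"], of i "Suc m"] st by simp
            moreover have "in_IJ n J (h2 (Suc m) (S (Suc i)))" using IH st rim by simp
            moreover have "in_IJ n J (h2 m (S i))" using Am[of i] i1 rim by simp
            ultimately show ?thesis by (simp add: in_IJ_add in_IJ_mult)
          qed
        qed
      qed
    qed
    show ?case
    proof (intro conjI allI impI)
      fix i assume "1 \<le> i" "i \<le> Suc n" "r i \<le> Suc m"
      then show "in_IJ n J (h2 (Suc m) (S i))"
        using A'[of "Suc n - i"] by simp
    next
      fix i k assume "i \<le> Suc n" "k \<in> J" "k < i" "r i \<le> Suc m"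
      then show "in_IJ n J (pd k (h2 (Suc m) (S i)))" using B' by blast
    qed
  qed
  show ?thesis
    using main[of "n - card J + 1"] assms(2) rJ SJ assms(1) by force
qed

end
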